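(* Let $R$ be a commutative ring, $M$ a faithful primeful $R$-module having at least one prime submodule, $X=\mathrm{Spec}(M)$, and $N$ an $R$-module. For every $f\in R$, the module $\mathcal{A}(N,M)(X_f)$ is isomorphic to the localization $N_f$.
   Context: For a submodule $L$ of an $R$-module $M$, $(L:M)=\{r\in R\mid rM\subseteq L\}$. A submodule $P$ of $M$ is prime if $P\neq M$ and whenever $rm\in P$ ($r\in R$, $m\in M$) then $r\in (P:M)$ or $m\in P$. $\mathrm{Spec}(M)$ is the set of prime submodules. $M$ is faithful if $\mathrm{Ann}_R(M)=0$; primeful if $M=0$ or $\mathrm{Spec}(M)\to\mathrm{Spec}(R/\mathrm{Ann}(M))$, $P\mapsto(P:M)/\mathrm{Ann}(M)$, is surjective. For $L\le M$, $V(L)=\{P\in X\mid (P:M)\supseteq (L:M)\}$; these are the closed sets of the Zariski topology. For $r\in R$, $X_r=X\setminus V(rM)$. For open $U\subseteq X$, $\mathrm{Supp}(U)=\{(P:M)\mid P\in U\}$. $\mathcal{A}(N,M)(U)$ is the $R$-module of families $(\gamma_{\mathfrak p})_{\mathfrak p\in\mathrm{Supp}(U)}\in\prod_{\mathfrak p\in\mathrm{Supp}(U)}N_{\mathfrak p}$ such that for each $Q\in U$ there exist an open neighbourhood $W\subseteq U$ of $Q$ and $s\in R$, $m\in N$ with $s\notin(P:M)$ and $\gamma_{(P:M)}=m/s$ for every $P\in W$. $N_f$ is the localization of $N$ at $\{f^n\mid n\ge0\}$. *)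

theory Defs
  imports Main "HOL.Modules"
begin

text \<open>The ring R is the type 'a (a commutative ring with 1). An R-module is an
abelian group type together with a scalar multiplication satisfying the HOL locale module.
The module M is the whole type 'm with scalar multiplication sM, and N is the whole type 'n
with scalar multiplication sN.\<close>

definition submodule :: "('a::comm_ring_1 \<Rightarrow> 'm::ab_group_add \<Rightarrow> 'm) \<Rightarrow> 'm set \<Rightarrow> bool" where
  "submodule sM L \<longleftrightarrow> 0 \<in> L \<and> (\<forall>x\<in>L. \<forall>y\<in>L. x + y \<in> L) \<and> (\<forall>c. \<forall>x\<in>L. sM c x \<in> L)"

definition colon :: "('a::comm_ring_1 \<Rightarrow> 'm::ab_group_add \<Rightarrow> 'm) \<Rightarrow> 'm set \<Rightarrow> 'a set" where
  "colon sM L = {r. \<forall>m. sM r m \<in> L}"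

definition prime_submodule :: "('a::comm_ring_1 \<Rightarrow> 'm::ab_group_add \<Rightarrow> 'm) \<Rightarrow> 'm set \<Rightarrow> bool" where
  "prime_submodule sM P \<longleftrightarrow> submodule sM P \<and> P \<noteq> UNIV \<and>
     (\<forall>r m. sM r m \<in> P \<longrightarrow> r \<in> colon sM P \<or> m \<in> P)"

definition Spec :: "('a::comm_ring_1 \<Rightarrow> 'm::ab_group_add \<Rightarrow> 'm) \<Rightarrow> 'm set set" where
  "Spec sM = {P. prime_submodule sM P}"

definition Ann :: "('a::comm_ring_1 \<Rightarrow> 'm::ab_group_add \<Rightarrow> 'm) \<Rightarrow> 'a set" where
  "Ann sM = colon sM {0}"

definition faithful :: "('a::comm_ring_1 \<Rightarrow> 'm::ab_group_add \<Rightarrow> 'm) \<Rightarrow> bool" where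
  "faithful sM \<longleftrightarrow> Ann sM = {0}"

definition ideal :: "'a::comm_ring_1 set \<Rightarrow> bool" where
  "ideal I \<longleftrightarrow> 0 \<in> I \<and> (\<forall>x\<in>I. \<forall>y\<in>I. x + y \<in> I) \<and> (\<forall>r. \<forall>x\<in>I. r * x \<in> I)"

definition prime_ideal :: "'a::comm_ring_1 set \<Rightarrow> bool" where
  "prime_ideal p \<longleftrightarrow> ideal p \<and> p \<noteq> UNIV \<and> (\<forall>a b. a * b \<in> p \<longrightarrow> a \<in> p \<or> b \<in> p)"

text \<open>Primeful: M = 0 or the map P \<mapsto> (P:M)/Ann(M) from Spec(M) to Spec(R/Ann(M)) is surjective.
Prime ideals of R/Ann(M) are identified with the prime ideals of R containing Ann(M), the
correspondence being p \<mapsto> p/Ann(M); so surjectivity says every prime ideal p \<supseteq> Ann(M)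
equals (P:M) for some prime submodule P.\<close>
definition primeful :: "('a::comm_ring_1 \<Rightarrow> 'm::ab_group_add \<Rightarrow> 'm) \<Rightarrow> bool" where
  "primeful sM \<longleftrightarrow> (UNIV :: 'm set) = {0} \<or>
     (\<forall>p. prime_ideal p \<and> Ann sM \<subseteq> p \<longrightarrow> (\<exists>P\<in>Spec sM. colon sM P = p))"

definition V :: "('a::comm_ring_1 \<Rightarrow> 'm::ab_group_add \<Rightarrow> 'm) \<Rightarrow> 'm set \<Rightarrow> 'm set set" where
  "V sM L = {P \<in> Spec sM. colon sM P \<supseteq> colon sM L}"

definition zariski_open :: "('a::comm_ring_1 \<Rightarrow> 'm::ab_group_add \<Rightarrow> 'm) \<Rightarrow> 'm set set \<Rightarrow> bool" where
  "zariski_open sM U \<longleftrightarrow> (\<exists>L. submodule sM L \<and> U = Spec sM - V sM L)"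

definition Xr :: "('a::comm_ring_1 \<Rightarrow> 'm::ab_group_add \<Rightarrow> 'm) \<Rightarrow> 'a \<Rightarrow> 'm set set" where
  "Xr sM r = Spec sM - V sM (range (sM r))"

definition Supp :: "('a::comm_ring_1 \<Rightarrow> 'm::ab_group_add \<Rightarrow> 'm) \<Rightarrow> 'm set set \<Rightarrow> 'a set set" where
  "Supp sM U = (\<lambda>P. colon sM P) ` U"

definition loc_rel :: "'a::comm_ring_1 set \<Rightarrow> ('a \<Rightarrow> 'n::ab_group_add \<Rightarrow> 'n) \<Rightarrow> 'n \<times> 'a \<Rightarrow> 'n \<times> 'a \<Rightarrow> bool" where
  "loc_rel S sN x y \<longleftrightarrow> (\<exists>t\<in>S. sN t (sN (snd y) (fst x) - sN (snd x) (fst y)) = 0)"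

definition loc_class :: "'a::comm_ring_1 set \<Rightarrow> ('a \<Rightarrow> 'n::ab_group_add \<Rightarrow> 'n) \<Rightarrow> 'n \<times> 'a \<Rightarrow> ('n \<times> 'a) set" where
  "loc_class S sN x = {y. snd y \<in> S \<and> loc_rel S sN x y}"

definition loc_carrier :: "'a::comm_ring_1 set \<Rightarrow> ('a \<Rightarrow> 'n::ab_group_add \<Rightarrow> 'n) \<Rightarrow> ('n \<times> 'a) set set" where
  "loc_carrier S sN = {loc_class S sN (m, s) | m s. s \<in> S}"

definition loc_add :: "'a::comm_ring_1 set \<Rightarrow> ('a \<Rightarrow> 'n::ab_group_add \<Rightarrow> 'n) \<Rightarrow> ('n \<times> 'a) set \<Rightarrow> ('n \<times> 'a) set \<Rightarrow> ('n \<times> 'a) set" where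
  "loc_add S sN x y = (let (m1, s1) = (SOME z. z \<in> x); (m2, s2) = (SOME z. z \<in> y)
     in loc_class S sN (sN s2 m1 + sN s1 m2, s1 * s2))"

definition loc_scale :: "'a::comm_ring_1 set \<Rightarrow> ('a \<Rightarrow> 'n::ab_group_add \<Rightarrow> 'n) \<Rightarrow> 'a \<Rightarrow> ('n \<times> 'a) set \<Rightarrow> ('n \<times> 'a) set" where
  "loc_scale S sN r x = (let (m, s) = (SOME z. z \<in> x) in loc_class S sN (sN r m, s))"

text \<open>N_p for a prime ideal p: localization at R - p; N_f: localization at the powers of f.\<close>
abbreviation powers :: "'a::comm_ring_1 \<Rightarrow> 'a set" where
  "powers f \<equiv> range (\<lambda>n::nat. f ^ n)"

text \<open>The module A(N,M)(U) of sections: families (gamma_p)_{p \<in> Supp(U)}, represented as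
functions that are {} outside Supp(U).\<close>
definition sections :: "('a::comm_ring_1 \<Rightarrow> 'm::ab_group_add \<Rightarrow> 'm) \<Rightarrow> ('a \<Rightarrow> 'n::ab_group_add \<Rightarrow> 'n)
    \<Rightarrow> 'm set set \<Rightarrow> ('a set \<Rightarrow> ('n \<times> 'a) set) set" where
  "sections sM sN U = {\<gamma>.
     (\<forall>p. p \<notin> Supp sM U \<longrightarrow> \<gamma> p = {}) \<and>
     (\<forall>p\<in>Supp sM U. \<gamma> p \<in> loc_carrier (- p) sN) \<and>
     (\<forall>Q\<in>U. \<exists>W. zariski_open sM W \<and> Q \<in> W \<and> W \<subseteq> U \<and>
        (\<exists>s m. \<forall>P\<in>W. s \<notin> colon sM P \<and>
                 \<gamma> (colon sM P) = loc_class (- colon sM P) sN (m, s)))}"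

definition sect_add :: "('a::comm_ring_1 \<Rightarrow> 'm::ab_group_add \<Rightarrow> 'm) \<Rightarrow> ('a \<Rightarrow> 'n::ab_group_add \<Rightarrow> 'n)
    \<Rightarrow> 'm set set \<Rightarrow> ('a set \<Rightarrow> ('n \<times> 'a) set) \<Rightarrow> ('a set \<Rightarrow> ('n \<times> 'a) set) \<Rightarrow> ('a set \<Rightarrow> ('n \<times> 'a) set)" where
  "sect_add sM sN U \<gamma> \<delta> = (\<lambda>p. if p \<in> Supp sM U then loc_add (- p) sN (\<gamma> p) (\<delta> p) else {})"

definition sect_scale :: "('a::comm_ring_1 \<Rightarrow> 'm::ab_group_add \<Rightarrow> 'm) \<Rightarrow> ('a \<Rightarrow> 'n::ab_group_add \<Rightarrow> 'n)
    \<Rightarrow> 'm set set \<Rightarrow> 'a \<Rightarrow> ('a set \<Rightarrow> ('n \<times> 'a) set) \<Rightarrow> ('a set \<Rightarrow> ('n \<times> 'a) set)" where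
  "sect_scale sM sN U r \<gamma> = (\<lambda>p. if p \<in> Supp sM U then loc_scale (- p) sN r (\<gamma> p) else {})"

end

theory Submission
  imports Defs
begin

lemma rmod: "module ((*) :: 'a::comm_ring_1 \<Rightarrow> 'a \<Rightarrow> 'a)"
  by standard (simp_all add: algebra_simps)

abbreviation ispan :: "'a::comm_ring_1 set \<Rightarrow> 'a set" where
  "ispan \<equiv> module.span ((*))"

lemma ideal_subspace: "ideal I \<Longrightarrow> module.subspace ((*)) I"
  unfolding ideal_def module.subspace_def[OF rmod] by simp

lemma span_ideal: "ideal (ispan A)"
  unfolding ideal_def by (simp add: module.span_zero[OF rmod] module.span_add[OF rmod] module.span_scale[OF rmod])

lemma ideal_mult_left: "ideal I \<Longrightarrow> x \<in> I \<Longrightarrow> x * r \<in> I"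
  unfolding ideal_def by (metis mult.commute)

lemma prime_one: "prime_ideal p \<Longrightarrow> (1::'a::comm_ring_1) \<notin> p"
  unfolding prime_ideal_def ideal_def by (metis UNIV_eq_I mult.right_neutral)

lemma prime_pow_notin: "prime_ideal p \<Longrightarrow> (f::'a::comm_ring_1) \<notin> p \<Longrightarrow> f ^ n \<notin> p"
proof (induction n)
  case 0 then show ?case using prime_one by simp
next
  case (Suc n) then show ?case unfolding prime_ideal_def by auto
qed

lemma prime_mult_notin: "prime_ideal p \<Longrightarrow> (a::'a::comm_ring_1) \<notin> p \<Longrightarrow> b \<notin> p \<Longrightarrow> a * b \<notin> p"
  unfolding prime_ideal_def by auto

lemma ideal_pow_in: "ideal p \<Longrightarrow> (f::'a::comm_ring_1) \<in> p \<Longrightarrow> f ^ Suc n \<in> p"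
  unfolding ideal_def by (metis power_Suc2)

definition ideal_ext :: "'a::comm_ring_1 set \<Rightarrow> 'a \<Rightarrow> 'a set" where
  "ideal_ext M a = {j + x * a | j x. j \<in> M}"

lemma ideal_ext_mem: "y \<in> ideal_ext M a \<longleftrightarrow> (\<exists>j x. y = j + x * a \<and> j \<in> M)"
  unfolding ideal_ext_def by blast

lemma ideal_ext: assumes M: "ideal M"
  shows "ideal (ideal_ext M a)" "M \<subseteq> ideal_ext M a" "a \<in> ideal_ext M a"
proof -
  have M0: "0 \<in> M" and Madd: "\<And>x y. x \<in> M \<Longrightarrow> y \<in> M \<Longrightarrow> x + y \<in> M"
    and Mmul: "\<And>x r. x \<in> M \<Longrightarrow> r * x \<in> M" using M unfolding ideal_def by blast+
  show "ideal (ideal_ext M a)" unfolding ideal_def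
  proof (intro conjI ballI allI)
    have "0 = 0 + 0 * a" by simp
    then show "0 \<in> ideal_ext M a" unfolding ideal_ext_mem using M0 by blast
  next
    fix u v assume "u \<in> ideal_ext M a" "v \<in> ideal_ext M a"
    then obtain j1 x1 j2 x2 where "u = j1 + x1 * a" "v = j2 + x2 * a" "j1 \<in> M" "j2 \<in> M"
      unfolding ideal_ext_mem by auto
    moreover have "j1 + x1 * a + (j2 + x2 * a) = (j1 + j2) + (x1 + x2) * a"
      by (simp add: distrib_right add_ac)
    ultimately show "u + v \<in> ideal_ext M a" unfolding ideal_ext_mem
      by (intro exI[of _ "j1 + j2"] exI[of _ "x1 + x2"] conjI) (simp_all add: Madd)
  next
    fix r u assume "u \<in> ideal_ext M a"
    then obtain j1 x1 where "u = j1 + x1 * a" "j1 \<in> M" unfolding ideal_ext_mem by auto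
    moreover have "r * (j1 + x1 * a) = r * j1 + (r * x1) * a"
      by (simp add: distrib_left mult.assoc)
    ultimately show "r * u \<in> ideal_ext M a" unfolding ideal_ext_mem
      by (intro exI[of _ "r * j1"] exI[of _ "r * x1"] conjI) (simp_all add: Mmul)
  qed
  show "M \<subseteq> ideal_ext M a"
  proof
    fix x assume "x \<in> M"
    moreover have "x = x + 0 * a" by simp
    ultimately show "x \<in> ideal_ext M a" unfolding ideal_ext_mem by blast
  qed
  have "a = 0 + 1 * a" by simp
  then show "a \<in> ideal_ext M a" unfolding ideal_ext_mem using M0 by blast
qed

lemma krull:
  fixes I :: "'a::comm_ring_1 set"
  assumes I: "ideal I" and nf: "\<forall>n. f ^ n \<notin> I"
  shows "\<exists>p. prime_ideal p \<and> I \<subseteq> p \<and> f \<notin> p"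
proof -
  define A where "A = {J. ideal J \<and> I \<subseteq> J \<and> (\<forall>n. f ^ n \<notin> J)}"
  have "\<forall>C\<in>chains A. \<exists>U\<in>A. \<forall>X\<in>C. X \<subseteq> U"
  proof
    fix C assume C: "C \<in> chains A"
    show "\<exists>U\<in>A. \<forall>X\<in>C. X \<subseteq> U"
    proof (cases "C = {}")
      case True then show ?thesis using I nf by (auto simp: A_def)
    next
      case False
      have CA: "C \<subseteq> A" and ch: "\<forall>X\<in>C. \<forall>Y\<in>C. X \<subseteq> Y \<or> Y \<subseteq> X"
        using C by (auto simp: chains_def chain_subset_def)
      have "ideal (\<Union>C)" unfolding ideal_def
      proof (intro conjI ballI allI)
        show "0 \<in> \<Union>C" using False CA by (auto simp: A_def ideal_def)
      next
        fix x y assume "x \<in> \<Union>C" "y \<in> \<Union>C"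
        then obtain X Y where "X \<in> C" "Y \<in> C" "x \<in> X" "y \<in> Y" by blast
        moreover have "\<And>Z. Z \<in> C \<Longrightarrow> x \<in> Z \<Longrightarrow> y \<in> Z \<Longrightarrow> x + y \<in> Z"
          using CA unfolding A_def ideal_def by blast
        ultimately show "x + y \<in> \<Union>C" using ch by (metis UnionI subsetD)
      next
        fix r x assume "x \<in> \<Union>C"
        then obtain X where "X \<in> C" "x \<in> X" by blast
        with CA show "r * x \<in> \<Union>C" unfolding A_def ideal_def by blast
      qed
      moreover have "I \<subseteq> \<Union>C" using False CA by (auto simp: A_def)
      moreover have "\<forall>n. f ^ n \<notin> \<Union>C" using CA by (auto simp: A_def)
      ultimately show ?thesis by (intro bexI[of _ "\<Union>C"]) (auto simp: A_def)
    qed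
  qed
  from Zorn_Lemma2[OF this] obtain M where MA: "M \<in> A" and mx: "\<forall>X\<in>A. M \<subseteq> X \<longrightarrow> X = M" by blast
  have M: "ideal M" "I \<subseteq> M" "\<forall>n. f ^ n \<notin> M" using MA by (auto simp: A_def)
  have ext: "\<exists>n. f ^ n \<in> ideal_ext M a" if "a \<notin> M" for a
  proof (rule ccontr)
    assume "\<not> ?thesis"
    moreover have "I \<subseteq> ideal_ext M a" using M(2) ideal_ext(2)[OF M(1)] by (rule subset_trans)
    ultimately have "ideal_ext M a \<in> A" using ideal_ext(1)[OF M(1)] unfolding A_def by blast
    moreover have "M \<subseteq> ideal_ext M a" using ideal_ext(2)[OF M(1)] .
    ultimately have "ideal_ext M a = M" using mx by blast
    then show False using ideal_ext(3)[OF M(1), of a] that by simp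
  qed
  have Madd: "x \<in> M \<Longrightarrow> y \<in> M \<Longrightarrow> x + y \<in> M" for x y using M(1) unfolding ideal_def by blast
  have Mmul: "x \<in> M \<Longrightarrow> r * x \<in> M" for x r using M(1) unfolding ideal_def by blast
  have "prime_ideal M" unfolding prime_ideal_def
  proof (intro conjI allI impI)
    show "ideal M" by fact
    have "f ^ 0 \<notin> M" using M(3) by blast
    then show "M \<noteq> UNIV" by blast
  next
    fix a b assume ab: "a * b \<in> M"
    show "a \<in> M \<or> b \<in> M"
    proof (rule ccontr)
      assume "\<not> (a \<in> M \<or> b \<in> M)"
      then obtain n k where "f ^ n \<in> ideal_ext M a" "f ^ k \<in> ideal_ext M b" using ext by blast
      then obtain j1 x1 j2 x2 where e: "f ^ n = j1 + x1 * a" "f ^ k = j2 + x2 * b" "j1 \<in> M" "j2 \<in> M"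
        unfolding ideal_ext_mem by auto
      have "f ^ (n + k) = f ^ n * f ^ k" by (rule power_add)
      also have "\<dots> = (j1 + x1 * a) * (j2 + x2 * b)" by (simp only: e(1,2))
      also have "\<dots> = j1 * j2 + j1 * (x2 * b) + (x1 * a) * j2 + (x1 * a) * (x2 * b)"
        by (simp only: distrib_left distrib_right add_ac)
      also have "(x1 * a) * (x2 * b) = (x1 * x2) * (a * b)" by (simp only: mult_ac)
      also have "j1 * (x2 * b) = (x2 * b) * j1" by (rule mult.commute)
      also have "j1 * j2 + (x2 * b) * j1 + (x1 * a) * j2 + (x1 * x2) * (a * b) \<in> M"
        by (intro Madd Mmul[OF e(4)] Mmul[OF e(3)] Mmul[OF ab])
      finally show False using M(3) by blast
    qed
  qed
  moreover have "f \<notin> M" using M(3)[rule_format, of 1] by simp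
  ultimately show ?thesis using M(2) by blast
qed

lemma rad:
  fixes I :: "'a::comm_ring_1 set"
  assumes "ideal I" "\<And>p. prime_ideal p \<Longrightarrow> I \<subseteq> p \<Longrightarrow> f \<in> p"
  shows "\<exists>n. f ^ n \<in> I"
  using krull[OF assms(1), of f] assms(2) by blast

definition mult_set :: "'a::comm_ring_1 set \<Rightarrow> bool" where
  "mult_set S \<longleftrightarrow> 1 \<in> S \<and> (\<forall>x\<in>S. \<forall>y\<in>S. x * y \<in> S)"

lemma mult_set_prime: "prime_ideal p \<Longrightarrow> mult_set (- p)"
  unfolding mult_set_def using prime_one prime_mult_notin by auto

lemma mult_set_powers: "mult_set (powers f)"
  unfolding mult_set_def by (auto simp: power_add[symmetric] intro: range_eqI[of _ _ 0])

context module
begin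

lemma loc_refl: "1 \<in> S \<Longrightarrow> loc_rel S scale x x"
  unfolding loc_rel_def by (intro bexI[of _ 1]) simp_all

lemma loc_sym: "loc_rel S scale x y \<Longrightarrow> loc_rel S scale y x"
  unfolding loc_rel_def
proof (elim bexE)
  fix t assume "t \<in> S" "t *s (snd y *s fst x - snd x *s fst y) = 0"
  then show "\<exists>t\<in>S. t *s (snd x *s fst y - snd y *s fst x) = 0"
    by (intro bexI[of _ t]) (simp_all add: scale_right_diff_distrib)
qed

lemma loc_trans:
  assumes S: "mult_set S" and yS: "snd y \<in> S"
    and xy: "loc_rel S scale x y" and yz: "loc_rel S scale y z"
  shows "loc_rel S scale x z"
proof -
  obtain t where t: "t \<in> S" "t *s (snd y *s fst x - snd x *s fst y) = 0" using xy unfolding loc_rel_def by blast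
  obtain u where u: "u \<in> S" "u *s (snd z *s fst y - snd y *s fst z) = 0" using yz unfolding loc_rel_def by blast
  have "(t * u * snd y) *s (snd z *s fst x - snd x *s fst z)
      = (u * snd z) *s (t *s (snd y *s fst x - snd x *s fst y)) + (t * snd x) *s (u *s (snd z *s fst y - snd y *s fst z))"
    by (simp add: scale_right_diff_distrib scale_right_distrib mult_ac)
  also have "\<dots> = 0" using t u by simp
  finally show ?thesis unfolding loc_rel_def using S t(1) u(1) yS unfolding mult_set_def by blast
qed

lemma class_mem: "1 \<in> S \<Longrightarrow> snd x \<in> S \<Longrightarrow> x \<in> loc_class S scale x"
  unfolding loc_class_def using loc_refl by blast

lemma class_eq:
  assumes S: "mult_set S" and "snd x \<in> S" "snd y \<in> S" "loc_rel S scale x y"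
  shows "loc_class S scale x = loc_class S scale y"
  unfolding loc_class_def using loc_trans[OF S] loc_sym assms by blast

lemma class_eq_iff:
  assumes S: "mult_set S" and "snd x \<in> S" "snd y \<in> S"
  shows "loc_class S scale x = loc_class S scale y \<longleftrightarrow> loc_rel S scale x y"
proof
  assume "loc_class S scale x = loc_class S scale y"
  then have "y \<in> loc_class S scale x" using class_mem[of S y] S assms(3) unfolding mult_set_def by simp
  then show "loc_rel S scale x y" unfolding loc_class_def by simp
qed (rule class_eq[OF assms])

lemma some_class:
  assumes S: "mult_set S" and "snd x \<in> S"
  shows "snd (SOME z. z \<in> loc_class S scale x) \<in> S"
    "loc_rel S scale x (SOME z. z \<in> loc_class S scale x)"
    "loc_class S scale (SOME z. z \<in> loc_class S scale x) = loc_class S scale x"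
proof -
  have "x \<in> loc_class S scale x" using class_mem assms unfolding mult_set_def by blast
  then have m: "(SOME z. z \<in> loc_class S scale x) \<in> loc_class S scale x" by (rule someI)
  then show "snd (SOME z. z \<in> loc_class S scale x) \<in> S" "loc_rel S scale x (SOME z. z \<in> loc_class S scale x)"
    unfolding loc_class_def by auto
  then show "loc_class S scale (SOME z. z \<in> loc_class S scale x) = loc_class S scale x"
    using class_eq[OF S] loc_sym assms(2) by metis
qed

lemma carrier_rep:
  assumes S: "mult_set S" and c: "c \<in> loc_carrier S scale"
  shows "snd (SOME z. z \<in> c) \<in> S" "c = loc_class S scale (SOME z. z \<in> c)"
proof -
  obtain m s where c: "c = loc_class S scale (m, s)" "s \<in> S" using c unfolding loc_carrier_def by blast
  show "snd (SOME z. z \<in> c) \<in> S" "c = loc_class S scale (SOME z. z \<in> c)"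
    using some_class[OF S, of "(m, s)"] c by auto
qed

lemma rel_mono: "S \<subseteq> T \<Longrightarrow> loc_rel S scale x y \<Longrightarrow> loc_rel T scale x y"
  unfolding loc_rel_def by blast

lemma add_wd1:
  assumes "loc_rel S scale x y" "mult_set S"
  shows "loc_rel S scale (snd z *s fst x + snd x *s fst z, snd x * snd z) (snd z *s fst y + snd y *s fst z, snd y * snd z)"
proof -
  obtain t where t: "t \<in> S" "t *s (snd y *s fst x - snd x *s fst y) = 0" using assms unfolding loc_rel_def by blast
  have "t *s ((snd y * snd z) *s (snd z *s fst x + snd x *s fst z) - (snd x * snd z) *s (snd z *s fst y + snd y *s fst z))
     = (snd z * snd z) *s (t *s (snd y *s fst x - snd x *s fst y))"
    by (simp add: scale_right_diff_distrib scale_right_distrib mult_ac)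
  also have "\<dots> = 0" using t by simp
  finally show ?thesis unfolding loc_rel_def using t(1) by auto
qed

lemma loc_sum_comm: "(snd y *s fst x + snd x *s fst y, snd x * snd y) = (snd x *s fst y + snd y *s fst x, snd y * snd x)"
  by (simp add: add.commute mult.commute)

lemma loc_add_class:
  assumes S: "mult_set S" and "snd x \<in> S" "snd y \<in> S"
  shows "loc_add S scale (loc_class S scale x) (loc_class S scale y) =
         loc_class S scale (snd y *s fst x + snd x *s fst y, snd x * snd y)"
proof -
  define x' where "x' = (SOME z. z \<in> loc_class S scale x)"
  define y' where "y' = (SOME z. z \<in> loc_class S scale y)"
  have x': "snd x' \<in> S" "loc_rel S scale x' x" using some_class[OF S assms(2)] loc_sym unfolding x'_def by auto
  have y': "snd y' \<in> S" "loc_rel S scale y' y" using some_class[OF S assms(3)] loc_sym unfolding y'_def by auto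
  have Sm: "\<And>a b. a \<in> S \<Longrightarrow> b \<in> S \<Longrightarrow> a * b \<in> S" using S unfolding mult_set_def by blast
  have "loc_add S scale (loc_class S scale x) (loc_class S scale y) =
        loc_class S scale (snd y' *s fst x' + snd x' *s fst y', snd x' * snd y')"
    unfolding loc_add_def x'_def[symmetric] y'_def[symmetric] by (simp add: case_prod_beta Let_def)
  also have "\<dots> = loc_class S scale (snd y' *s fst x + snd x *s fst y', snd x * snd y')"
    using add_wd1[OF x'(2) S, of y'] x' y' assms Sm by (intro class_eq[OF S]) auto
  also have "\<dots> = loc_class S scale (snd x *s fst y' + snd y' *s fst x, snd y' * snd x)"
    by (simp add: add.commute mult.commute)
  also have "\<dots> = loc_class S scale (snd x *s fst y + snd y *s fst x, snd y * snd x)"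
    using add_wd1[OF y'(2) S, of x] x' y' assms Sm by (intro class_eq[OF S]) auto
  also have "\<dots> = loc_class S scale (snd y *s fst x + snd x *s fst y, snd x * snd y)"
    by (simp add: add.commute mult.commute)
  finally show ?thesis .
qed

lemma loc_scale_class:
  assumes S: "mult_set S" and "snd x \<in> S"
  shows "loc_scale S scale r (loc_class S scale x) = loc_class S scale (r *s fst x, snd x)"
proof -
  define x' where "x' = (SOME z. z \<in> loc_class S scale x)"
  have x': "snd x' \<in> S" "loc_rel S scale x' x" using some_class[OF S assms(2)] loc_sym unfolding x'_def by auto
  obtain t where t: "t \<in> S" "t *s (snd x *s fst x' - snd x' *s fst x) = 0" using x'(2) unfolding loc_rel_def by blast
  have "t *s (snd x *s (r *s fst x') - snd x' *s (r *s fst x)) = r *s (t *s (snd x *s fst x' - snd x' *s fst x))"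
    by (simp add: scale_right_diff_distrib mult_ac)
  also have "\<dots> = 0" using t by simp
  finally have "loc_rel S scale (r *s fst x', snd x') (r *s fst x, snd x)"
    unfolding loc_rel_def using t(1) by auto
  then have "loc_class S scale (r *s fst x', snd x') = loc_class S scale (r *s fst x, snd x)"
    using x' assms by (intro class_eq[OF S]) auto
  then show ?thesis unfolding loc_scale_def x'_def[symmetric] by (simp add: case_prod_beta Let_def)
qed

lemma class_in_carrier: "snd x \<in> S \<Longrightarrow> loc_class S scale x \<in> loc_carrier S scale"
  unfolding loc_carrier_def by (cases x) auto

end

lemma colon_prime:
  assumes M: "module sM" and P: "P \<in> Spec sM"
  shows "prime_ideal (colon sM P)"
proof -
  interpret M: module sM by (rule M)
  have sub: "submodule sM P" and nU: "P \<noteq> UNIV" and pr: "\<And>r m. sM r m \<in> P \<Longrightarrow> r \<in> colon sM P \<or> m \<in> P"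
    using P unfolding Spec_def prime_submodule_def by auto
  have P0: "0 \<in> P" and Padd: "\<And>x y. x \<in> P \<Longrightarrow> y \<in> P \<Longrightarrow> x + y \<in> P"
    and Psc: "\<And>c x. x \<in> P \<Longrightarrow> sM c x \<in> P" using sub unfolding submodule_def by auto
  show ?thesis unfolding prime_ideal_def ideal_def
  proof (intro conjI ballI allI impI)
    show "0 \<in> colon sM P" unfolding colon_def using P0 by simp
  next
    fix x y assume "x \<in> colon sM P" "y \<in> colon sM P"
    then show "x + y \<in> colon sM P" unfolding colon_def by (simp add: M.scale_left_distrib Padd)
  next
    fix r x assume "x \<in> colon sM P"
    then have "sM x m \<in> P" for m unfolding colon_def by blast
    then have "sM r (sM x m) \<in> P" for m by (rule Psc)
    then show "r * x \<in> colon sM P" unfolding colon_def by simp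
  next
    show "colon sM P \<noteq> UNIV"
    proof
      assume "colon sM P = UNIV"
      then have "sM 1 m \<in> P" for m unfolding colon_def by blast
      then have "P = UNIV" by auto
      then show False using nU by simp
    qed
  next
    fix a b assume ab: "a * b \<in> colon sM P"
    show "a \<in> colon sM P \<or> b \<in> colon sM P"
    proof (cases "a \<in> colon sM P")
      case True then show ?thesis by blast
    next
      case False note na = this
      have "sM b m \<in> P" for m
      proof -
        have "sM a (sM b m) \<in> P" using ab unfolding colon_def by simp
        then show ?thesis using pr[of a "sM b m"] na by blast
      qed
      then have "b \<in> colon sM P" unfolding colon_def by simp
      then show ?thesis by blast
    qed
  qed
qed

lemma Xr_char:
  assumes M: "module sM"
  shows "Xr sM g = {P \<in> Spec sM. g \<notin> colon sM P}"
proof -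
  interpret M: module sM by (rule M)
  have gin: "g \<in> colon sM (range (sM g))" unfolding colon_def by simp
  have "P \<in> V sM (range (sM g)) \<longleftrightarrow> g \<in> colon sM P" if P: "P \<in> Spec sM" for P
  proof
    assume "P \<in> V sM (range (sM g))"
    then have "colon sM (range (sM g)) \<subseteq> colon sM P" unfolding V_def by simp
    then show "g \<in> colon sM P" using gin by (rule subsetD)
  next
    assume g: "g \<in> colon sM P"
    have "colon sM (range (sM g)) \<subseteq> colon sM P"
    proof
      fix r assume "r \<in> colon sM (range (sM g))"
      then have rr: "sM r m \<in> range (sM g)" for m unfolding colon_def by blast
      have "sM r m \<in> P" for m
      proof -
        obtain m' where "sM r m = sM g m'" using rr[of m] by blast
        moreover have "sM g m' \<in> P" using g unfolding colon_def by blast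
        ultimately show ?thesis by simp
      qed
      then show "r \<in> colon sM P" unfolding colon_def by blast
    qed
    then show "P \<in> V sM (range (sM g))" using P unfolding V_def by blast
  qed
  then show ?thesis unfolding Xr_def by blast
qed

lemma Xr_open:
  assumes M: "module sM"
  shows "zariski_open sM (Xr sM g)"
proof -
  interpret M: module sM by (rule M)
  have "submodule sM (range (sM g))" unfolding submodule_def
  proof (intro conjI ballI allI)
    show "0 \<in> range (sM g)" by (rule range_eqI[of _ _ 0]) simp
  next
    fix x y assume "x \<in> range (sM g)" "y \<in> range (sM g)"
    then obtain a b where "x = sM g a" "y = sM g b" by blast
    then show "x + y \<in> range (sM g)" by (simp add: M.scale_right_distrib[symmetric])
  next
    fix c x assume "x \<in> range (sM g)"
    then obtain a where "x = sM g a" by blast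
    then have "sM c x = sM g (sM c a)" by (simp add: mult.commute)
    then show "sM c x \<in> range (sM g)" by (simp only: rangeI)
  qed
  then show ?thesis unfolding zariski_open_def Xr_def by blast
qed

lemma open_basic:
  assumes M: "module sM" and W: "zariski_open sM W" and Q: "Q \<in> W"
  shows "\<exists>g. g \<notin> colon sM Q \<and> Xr sM g \<subseteq> W"
proof -
  obtain L where L: "W = Spec sM - V sM L" using W unfolding zariski_open_def by blast
  then have QS: "Q \<in> Spec sM" and "\<not> colon sM L \<subseteq> colon sM Q" using Q unfolding V_def by auto
  then obtain g where g: "g \<in> colon sM L" "g \<notin> colon sM Q" by blast
  have "Xr sM g \<subseteq> W" unfolding Xr_char[OF M] L V_def using g(1) by blast
  then show ?thesis using g by blast
qed

lemma prime_surj: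
  assumes M: "module sM" and fa: "faithful sM" and pf: "primeful sM" and p: "prime_ideal p"
  shows "\<exists>P\<in>Spec sM. colon sM P = p"
proof -
  interpret M: module sM by (rule M)
  have "(UNIV :: 'b set) \<noteq> {0}"
  proof
    assume U: "(UNIV :: 'b set) = {0}"
    have "sM 1 m = 0" for m :: 'b using U by blast
    then have "1 \<in> Ann sM" unfolding Ann_def colon_def by simp
    then show False using fa unfolding faithful_def by simp
  qed
  moreover have "Ann sM \<subseteq> p" using fa p unfolding faithful_def prime_ideal_def ideal_def by simp
  ultimately show ?thesis using pf p unfolding primeful_def by blast
qed

lemma Supp_Xr:
  assumes M: "module sM" and fa: "faithful sM" and pf: "primeful sM"
  shows "Supp sM (Xr sM f) = {p. prime_ideal p \<and> f \<notin> p}"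
proof
  show "Supp sM (Xr sM f) \<subseteq> {p. prime_ideal p \<and> f \<notin> p}"
    unfolding Supp_def Xr_char[OF M] using colon_prime[OF M] by auto
next
  show "{p. prime_ideal p \<and> f \<notin> p} \<subseteq> Supp sM (Xr sM f)"
  proof
    fix p assume "p \<in> {p. prime_ideal p \<and> f \<notin> p}"
    then have p: "prime_ideal p" "f \<notin> p" by auto
    obtain P where "P \<in> Spec sM" "colon sM P = p" using prime_surj[OF M fa pf p(1)] by blast
    then show "p \<in> Supp sM (Xr sM f)" unfolding Supp_def Xr_char[OF M] using p(2) by auto
  qed
qed

lemma L1:
  assumes N: "module sN"
    and H: "\<And>p. prime_ideal p \<Longrightarrow> g \<notin> p \<Longrightarrow> \<exists>t. t \<notin> p \<and> sN t x = 0"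
  shows "\<exists>n. sN (g ^ n) x = 0"
proof -
  interpret N: module sN by (rule N)
  have I: "ideal {t. sN t x = 0}" unfolding ideal_def
    by (simp add: N.scale_left_distrib flip: N.scale_scale)
  have "g \<in> p" if "prime_ideal p" "{t. sN t x = 0} \<subseteq> p" for p
    using H[OF that(1)] that(2) by blast
  from rad[OF I this] show ?thesis by simp
qed

definition psi :: "('a::comm_ring_1 \<Rightarrow> 'n::ab_group_add \<Rightarrow> 'n) \<Rightarrow> 'a \<Rightarrow> ('n \<times> 'a) set \<Rightarrow> 'a set \<Rightarrow> ('n \<times> 'a) set" where
  "psi sN f c = (\<lambda>p. if prime_ideal p \<and> f \<notin> p then loc_class (- p) sN (SOME z. z \<in> c) else {})"

lemma powers_sub: "prime_ideal p \<Longrightarrow> f \<notin> p \<Longrightarrow> powers f \<subseteq> - p"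
  using prime_pow_notin by blast

lemma psi_class:
  assumes N: "module sN" and p: "prime_ideal p" "f \<notin> p" and x: "snd x \<in> powers f"
  shows "psi sN f (loc_class (powers f) sN x) p = loc_class (- p) sN x"
proof -
  interpret N: module sN by (rule N)
  define z where "z = (SOME z. z \<in> loc_class (powers f) sN x)"
  have z: "snd z \<in> powers f" "loc_rel (powers f) sN x z"
    using N.some_class[OF mult_set_powers x] unfolding z_def by auto
  have "loc_rel (- p) sN x z" using N.rel_mono[OF powers_sub[OF p] z(2)] .
  then have "loc_class (- p) sN x = loc_class (- p) sN z"
    using x z(1) powers_sub[OF p] by (intro N.class_eq[OF mult_set_prime[OF p(1)]]) auto
  then show ?thesis unfolding psi_def z_def[symmetric] using p by simp
qed

lemma carrier_powers:
  assumes N: "module sN" and c: "c \<in> loc_carrier (powers f) sN"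
  obtains z where "snd z \<in> powers f" "c = loc_class (powers f) sN z"
  using module.carrier_rep[OF N mult_set_powers c] by blast

lemma psi_in:
  assumes M: "module sM" and N: "module sN" and fa: "faithful sM" and pf: "primeful sM"
    and c: "c \<in> loc_carrier (powers f) sN"
  shows "psi sN f c \<in> sections sM sN (Xr sM f)"
proof -
  interpret N: module sN by (rule N)
  obtain z where z: "snd z \<in> powers f" "c = loc_class (powers f) sN z" using carrier_powers[OF N c] by blast
  obtain i where i: "snd z = f ^ i" using z(1) by blast
  have S: "Supp sM (Xr sM f) = {p. prime_ideal p \<and> f \<notin> p}" by (rule Supp_Xr[OF M fa pf])
  have pc: "psi sN f c p = loc_class (- p) sN z" if "prime_ideal p" "f \<notin> p" for p
    unfolding z(2) using psi_class[OF N that z(1)] .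
  show ?thesis unfolding sections_def
  proof (intro CollectI conjI allI impI ballI)
    fix p assume "p \<notin> Supp sM (Xr sM f)"
    then show "psi sN f c p = {}" unfolding S psi_def by auto
  next
    fix p assume "p \<in> Supp sM (Xr sM f)"
    then have p: "prime_ideal p" "f \<notin> p" unfolding S by auto
    show "psi sN f c p \<in> loc_carrier (- p) sN" unfolding pc[OF p]
      using powers_sub[OF p] z(1) by (intro N.class_in_carrier) auto
  next
    fix Q assume Q: "Q \<in> Xr sM f"
    have "\<forall>P\<in>Xr sM f. f ^ i \<notin> colon sM P \<and> psi sN f c (colon sM P) = loc_class (- colon sM P) sN (fst z, f ^ i)"
    proof
      fix P assume "P \<in> Xr sM f"
      then have P: "prime_ideal (colon sM P)" "f \<notin> colon sM P" using Xr_char[OF M] colon_prime[OF M] by auto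
      then show "f ^ i \<notin> colon sM P \<and> psi sN f c (colon sM P) = loc_class (- colon sM P) sN (fst z, f ^ i)"
        using pc[OF P] prime_pow_notin[OF P] i by (metis prod.collapse)
    qed
    then show "\<exists>W. zariski_open sM W \<and> Q \<in> W \<and> W \<subseteq> Xr sM f \<and>
          (\<exists>s m. \<forall>P\<in>W. s \<notin> colon sM P \<and> psi sN f c (colon sM P) = loc_class (- colon sM P) sN (m, s))"
      using Xr_open[OF M] Q by blast
  qed
qed

lemma psi_inj:
  assumes N: "module sN"
  shows "inj_on (psi sN f) (loc_carrier (powers f) sN)"
proof (rule inj_onI)
  interpret N: module sN by (rule N)
  fix c d assume c: "c \<in> loc_carrier (powers f) sN" and d: "d \<in> loc_carrier (powers f) sN"
    and eq: "psi sN f c = psi sN f d"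
  obtain zc where zc: "snd zc \<in> powers f" "c = loc_class (powers f) sN zc" using carrier_powers[OF N c] by blast
  obtain zd where zd: "snd zd \<in> powers f" "d = loc_class (powers f) sN zd" using carrier_powers[OF N d] by blast
  define x where "x = sN (snd zd) (fst zc) - sN (snd zc) (fst zd)"
  have "\<exists>t. t \<notin> p \<and> sN t x = 0" if p: "prime_ideal p" "f \<notin> p" for p
  proof -
    have "loc_class (- p) sN zc = loc_class (- p) sN zd"
      using psi_class[OF N p zc(1)] psi_class[OF N p zd(1)] eq zc(2) zd(2) by metis
    then have "loc_rel (- p) sN zc zd"
      using powers_sub[OF p] zc(1) zd(1) N.class_eq_iff[OF mult_set_prime[OF p(1)]] by blast
    then show ?thesis unfolding loc_rel_def x_def by auto
  qed
  then obtain n where "sN (f ^ n) x = 0" using L1[OF N] by blast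
  then have "loc_rel (powers f) sN zc zd" unfolding loc_rel_def x_def by blast
  then show "c = d" unfolding zc(2) zd(2) using zc(1) zd(1) by (intro N.class_eq[OF mult_set_powers])
qed

lemma psi_add:
  assumes M: "module sM" and N: "module sN" and fa: "faithful sM" and pf: "primeful sM"
    and c: "c \<in> loc_carrier (powers f) sN" and d: "d \<in> loc_carrier (powers f) sN"
  shows "loc_add (powers f) sN c d \<in> loc_carrier (powers f) sN"
    "psi sN f (loc_add (powers f) sN c d) = sect_add sM sN (Xr sM f) (psi sN f c) (psi sN f d)"
proof -
  interpret N: module sN by (rule N)
  obtain zc where zc: "snd zc \<in> powers f" "c = loc_class (powers f) sN zc" using carrier_powers[OF N c] by blast
  obtain zd where zd: "snd zd \<in> powers f" "d = loc_class (powers f) sN zd" using carrier_powers[OF N d] by blast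
  define w where "w = (sN (snd zd) (fst zc) + sN (snd zc) (fst zd), snd zc * snd zd)"
  have "\<forall>x\<in>powers f. \<forall>y\<in>powers f. x * y \<in> powers f" using mult_set_powers[of f] unfolding mult_set_def by blast
  then have wS: "snd w \<in> powers f" using zc(1) zd(1) unfolding w_def snd_conv by blast
  have ad: "loc_add (powers f) sN c d = loc_class (powers f) sN w"
    unfolding zc(2) zd(2) w_def using N.loc_add_class[OF mult_set_powers zc(1) zd(1)] .
  show "loc_add (powers f) sN c d \<in> loc_carrier (powers f) sN" unfolding ad using wS by (rule N.class_in_carrier)
  have S: "Supp sM (Xr sM f) = {p. prime_ideal p \<and> f \<notin> p}" by (rule Supp_Xr[OF M fa pf])
  show "psi sN f (loc_add (powers f) sN c d) = sect_add sM sN (Xr sM f) (psi sN f c) (psi sN f d)"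
  proof
    fix p
    show "psi sN f (loc_add (powers f) sN c d) p = sect_add sM sN (Xr sM f) (psi sN f c) (psi sN f d) p"
    proof (cases "prime_ideal p \<and> f \<notin> p")
      case True
      then have p: "prime_ideal p" "f \<notin> p" by auto
      have "psi sN f (loc_add (powers f) sN c d) p = loc_class (- p) sN w"
        unfolding ad using psi_class[OF N p wS] .
      also have "\<dots> = loc_add (- p) sN (loc_class (- p) sN zc) (loc_class (- p) sN zd)"
        unfolding w_def using powers_sub[OF p] zc(1) zd(1)
        by (intro N.loc_add_class[OF mult_set_prime[OF p(1)], symmetric]) auto
      also have "\<dots> = sect_add sM sN (Xr sM f) (psi sN f c) (psi sN f d) p"
        unfolding sect_add_def S using p psi_class[OF N p zc(1)] psi_class[OF N p zd(1)] zc(2) zd(2) by simp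
      finally show ?thesis .
    next
      case False
      then show ?thesis unfolding sect_add_def S psi_def by auto
    qed
  qed
qed

lemma psi_scale:
  assumes M: "module sM" and N: "module sN" and fa: "faithful sM" and pf: "primeful sM"
    and c: "c \<in> loc_carrier (powers f) sN"
  shows "loc_scale (powers f) sN r c \<in> loc_carrier (powers f) sN"
    "psi sN f (loc_scale (powers f) sN r c) = sect_scale sM sN (Xr sM f) r (psi sN f c)"
proof -
  interpret N: module sN by (rule N)
  obtain zc where zc: "snd zc \<in> powers f" "c = loc_class (powers f) sN zc" using carrier_powers[OF N c] by blast
  define w where "w = (sN r (fst zc), snd zc)"
  have wS: "snd w \<in> powers f" using zc(1) unfolding w_def by auto
  have ad: "loc_scale (powers f) sN r c = loc_class (powers f) sN w"
    unfolding zc(2) w_def using N.loc_scale_class[OF mult_set_powers zc(1)] .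
  show "loc_scale (powers f) sN r c \<in> loc_carrier (powers f) sN" unfolding ad using wS by (rule N.class_in_carrier)
  have S: "Supp sM (Xr sM f) = {p. prime_ideal p \<and> f \<notin> p}" by (rule Supp_Xr[OF M fa pf])
  show "psi sN f (loc_scale (powers f) sN r c) = sect_scale sM sN (Xr sM f) r (psi sN f c)"
  proof
    fix p
    show "psi sN f (loc_scale (powers f) sN r c) p = sect_scale sM sN (Xr sM f) r (psi sN f c) p"
    proof (cases "prime_ideal p \<and> f \<notin> p")
      case True
      then have p: "prime_ideal p" "f \<notin> p" by auto
      have "psi sN f (loc_scale (powers f) sN r c) p = loc_class (- p) sN w"
        unfolding ad using psi_class[OF N p wS] .
      also have "\<dots> = loc_scale (- p) sN r (loc_class (- p) sN zc)"
        unfolding w_def using powers_sub[OF p] zc(1)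
        by (intro N.loc_scale_class[OF mult_set_prime[OF p(1)], symmetric]) auto
      also have "\<dots> = sect_scale sM sN (Xr sM f) r (psi sN f c) p"
        unfolding sect_scale_def S using p psi_class[OF N p zc(1)] zc(2) by simp
      finally show ?thesis .
    next
      case False
      then show ?thesis unfolding sect_scale_def S psi_def by auto
    qed
  qed
qed

lemma cover:
  fixes f :: "'a::comm_ring_1"
  assumes H: "\<And>p. prime_ideal p \<Longrightarrow> f \<notin> p \<Longrightarrow> \<exists>h\<in>H. h \<notin> p"
  shows "\<exists>T r e. finite T \<and> T \<subseteq> H \<and> f ^ e = (\<Sum>v\<in>T. r v * v)"
proof -
  have "f \<in> p" if p: "prime_ideal p" "ispan H \<subseteq> p" for p
  proof (rule ccontr)
    assume "f \<notin> p"
    then obtain h where "h \<in> H" "h \<notin> p" using H[OF p(1)] by blast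
    then show False using module.span_base[OF rmod, of h H] p(2) by blast
  qed
  from rad[OF span_ideal this] obtain e where "f ^ e \<in> ispan H" by blast
  then show ?thesis unfolding module.span_explicit[OF rmod] by blast
qed

lemma cover2:
  fixes f :: "'a::comm_ring_1"
  assumes T: "finite T" and e: "f ^ e = (\<Sum>v\<in>T. r v * v)" and p: "prime_ideal p" "f \<notin> p"
  shows "\<exists>v\<in>T. v \<notin> p"
proof (rule ccontr)
  assume "\<not> ?thesis"
  then have Tp: "T \<subseteq> p" by blast
  have mul: "\<And>x c. x \<in> p \<Longrightarrow> c * x \<in> p" using p(1) unfolding prime_ideal_def ideal_def by blast
  have "\<And>v. v \<in> T \<Longrightarrow> r v * v \<in> p" using Tp by (intro mul) blast
  moreover have "module.subspace (*) p" using p(1) unfolding prime_ideal_def by (intro ideal_subspace) simp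
  ultimately have "(\<Sum>v\<in>T. r v * v) \<in> p"
    by (intro module.subspace_sum[OF rmod])
  then have "f ^ e \<in> p" unfolding e .
  then show False using prime_pow_notin[OF p] by blast
qed

lemma psi_surj:
  assumes M: "module sM" and N: "module sN" and fa: "faithful sM" and pf: "primeful sM"
    and \<gamma>: "\<gamma> \<in> sections sM sN (Xr sM f)"
  shows "\<exists>c\<in>loc_carrier (powers f) sN. \<gamma> = psi sN f c"
proof -
  interpret N: module sN by (rule N)
  have S: "Supp sM (Xr sM f) = {p. prime_ideal p \<and> f \<notin> p}" by (rule Supp_Xr[OF M fa pf])
  have \<gamma>0: "\<And>p. \<not> (prime_ideal p \<and> f \<notin> p) \<Longrightarrow> \<gamma> p = {}" using \<gamma> unfolding sections_def S by auto
  have \<gamma>loc: "\<forall>Q\<in>Xr sM f. \<exists>W. zariski_open sM W \<and> Q \<in> W \<and> W \<subseteq> Xr sM f \<and>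
        (\<exists>s m. \<forall>P\<in>W. s \<notin> colon sM P \<and> \<gamma> (colon sM P) = loc_class (- colon sM P) sN (m, s))"
    using \<gamma> unfolding sections_def by blast
  define good where "good h a \<longleftrightarrow> (\<forall>p. prime_ideal p \<and> h \<notin> p \<longrightarrow> f \<notin> p \<and> \<gamma> p = loc_class (- p) sN (a, h))" for h a
  have step1: "\<exists>h a. h \<notin> q \<and> good h a" if q: "prime_ideal q" "f \<notin> q" for q
  proof -
    obtain Q where Q: "Q \<in> Spec sM" "colon sM Q = q" using prime_surj[OF M fa pf q(1)] by blast
    then have QX: "Q \<in> Xr sM f" using q(2) Xr_char[OF M] by auto
    obtain W s m where W: "zariski_open sM W" "Q \<in> W" "W \<subseteq> Xr sM f"
      and Wsm: "\<forall>P\<in>W. s \<notin> colon sM P \<and> \<gamma> (colon sM P) = loc_class (- colon sM P) sN (m, s)"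
      using \<gamma>loc QX by blast
    obtain g where g: "g \<notin> colon sM Q" "Xr sM g \<subseteq> W" using open_basic[OF M W(1,2)] by blast
    have gp: "f \<notin> p \<and> s \<notin> p \<and> \<gamma> p = loc_class (- p) sN (m, s)" if p: "prime_ideal p" "g \<notin> p" for p
    proof -
      obtain P where P: "P \<in> Spec sM" "colon sM P = p" using prime_surj[OF M fa pf p(1)] by blast
      then have "P \<in> Xr sM g" using p(2) Xr_char[OF M] by auto
      then have "P \<in> W" "P \<in> Xr sM f" using g(2) W(3) by auto
      then show ?thesis using Wsm P(2) Xr_char[OF M] by auto
    qed
    have "g \<in> p" if "prime_ideal p" "ispan {s} \<subseteq> p" for p
    proof (rule ccontr)
      assume "g \<notin> p"
      then have "s \<notin> p" using gp[OF that(1)] by blast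
      then show False using module.span_base[OF rmod, of s "{s}"] that(2) by blast
    qed
    from rad[OF span_ideal this] obtain k where "g ^ k \<in> ispan {s}" by blast
    then obtain c where c: "g ^ k = c * s" unfolding module.span_singleton[OF rmod] by blast
    define h where "h = g ^ Suc k"
    define a where "a = sN (g * c) m"
    have "good h a" unfolding good_def
    proof (intro allI impI)
      fix p assume p: "prime_ideal p \<and> h \<notin> p"
      then have gn: "g \<notin> p" unfolding h_def using ideal_pow_in[of p g k] unfolding prime_ideal_def by blast
      from gp[OF conjunct1[OF p] gn] have fs: "f \<notin> p" "s \<notin> p" "\<gamma> p = loc_class (- p) sN (m, s)" by auto
      have "sN h m - sN s a = sN (g * g ^ k) m - sN (s * (g * c)) m" unfolding h_def a_def by simp
      also have "\<dots> = 0" unfolding c by (simp add: mult_ac)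
      finally have "loc_rel (- p) sN (m, s) (a, h)" unfolding loc_rel_def
        using prime_one[of p] p by (intro bexI[of _ 1]) auto
      then have "loc_class (- p) sN (m, s) = loc_class (- p) sN (a, h)"
        using fs p by (intro N.class_eq[OF mult_set_prime]) auto
      then show "f \<notin> p \<and> \<gamma> p = loc_class (- p) sN (a, h)" using fs by simp
    qed
    moreover have "h \<notin> q" unfolding h_def using prime_pow_notin[OF q(1)] g(1) Q(2) by blast
    ultimately show ?thesis by blast
  qed
  have step2: "\<exists>n. sN ((h * k) ^ n) (sN k a - sN h b) = 0" if "good h a" "good k b" for h k a b
  proof (rule L1[OF N])
    fix p assume p: "prime_ideal p" "h * k \<notin> p"
    have mul: "\<And>x c. x \<in> p \<Longrightarrow> c * x \<in> p" using p(1) unfolding prime_ideal_def ideal_def by blast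
    have hk: "h \<notin> p" "k \<notin> p"
    proof
      assume "h \<in> p" then have "k * h \<in> p" by (rule mul)
      then show False using p(2) by (simp add: mult.commute)
    next
      show "k \<notin> p"
      proof
        assume "k \<in> p" then have "h * k \<in> p" by (rule mul)
        then show False using p(2) by simp
      qed
    qed
    have "loc_class (- p) sN (a, h) = loc_class (- p) sN (b, k)"
      using that hk p(1) unfolding good_def by metis
    then have "loc_rel (- p) sN (a, h) (b, k)"
      using hk N.class_eq_iff[OF mult_set_prime[OF p(1)]] by auto
    then show "\<exists>t. t \<notin> p \<and> sN t (sN k a - sN h b) = 0" unfolding loc_rel_def by auto
  qed
  define H where "H = {h. \<exists>a. good h a}"
  have Hcov: "\<exists>h\<in>H. h \<notin> p" if p: "prime_ideal p" "f \<notin> p" for p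
  proof -
    obtain h a where ha: "h \<notin> p" "good h a" using step1[OF p] by blast
    then have "h \<in> H" unfolding H_def by (rule_tac CollectI, rule_tac exI)
    then show ?thesis using ha(1) by (rule bexI[rotated])
  qed
  have "\<exists>T r e. finite T \<and> T \<subseteq> H \<and> f ^ e = (\<Sum>v\<in>T. r v * v)"
  proof (rule cover)
    fix p assume "prime_ideal p" "f \<notin> p" then show "\<exists>h\<in>H. h \<notin> p" by (rule Hcov)
  qed
  then obtain T1 r1 e1 where T1: "finite T1" "T1 \<subseteq> H" "f ^ e1 = (\<Sum>v\<in>T1. r1 v * v)"
    by (elim exE conjE) (rule that; assumption)
  define A where "A h = (SOME a. good h a)" for h
  have A: "good h (A h)" if "h \<in> T1" for h using T1(2) that unfolding H_def A_def by (blast intro: someI)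
  define n where "n hk = (SOME n. sN ((fst hk * snd hk) ^ n) (sN (snd hk) (A (fst hk)) - sN (fst hk) (A (snd hk))) = 0)" for hk
  have n: "sN ((h * k) ^ n (h, k)) (sN k (A h) - sN h (A k)) = 0" if "h \<in> T1" "k \<in> T1" for h k
    unfolding n_def fst_conv snd_conv using step2[OF A[OF that(1)] A[OF that(2)]] by (rule someI_ex)
  define NN where "NN = Max (n ` (T1 \<times> T1))"
  have NN: "n (h, k) \<le> NN" if "h \<in> T1" "k \<in> T1" for h k
    unfolding NN_def using T1(1) that by (intro Max_ge) auto
  have nNN: "sN ((h * k) ^ NN) (sN k (A h) - sN h (A k)) = 0" if "h \<in> T1" "k \<in> T1" for h k
  proof -
    have "(h * k) ^ NN = (h * k) ^ (NN - n (h, k)) * (h * k) ^ n (h, k)"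
      using NN[OF that] by (simp add: power_add[symmetric])
    then show ?thesis using n[OF that] by (simp flip: N.scale_scale)
  qed
  define V where "V = (\<lambda>h. h ^ Suc NN) ` T1"
  define \<rho> where "\<rho> v = (SOME h. h \<in> T1 \<and> v = h ^ Suc NN)" for v
  have \<rho>: "\<rho> v \<in> T1" "v = \<rho> v ^ Suc NN" if "v \<in> V" for v
    using that unfolding V_def \<rho>_def by (metis (mono_tags, lifting) imageE someI)+
  define \<alpha> where "\<alpha> v = sN (\<rho> v ^ NN) (A (\<rho> v))" for v
  have goodV: "good v (\<alpha> v)" if v: "v \<in> V" for v
    unfolding good_def
  proof (intro allI impI)
    fix p assume p: "prime_ideal p \<and> v \<notin> p"
    define h where "h = \<rho> v"
    have hv: "v = h ^ Suc NN" "h \<in> T1" using \<rho>[OF v] unfolding h_def by auto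
    have hp: "h \<notin> p" using p hv ideal_pow_in[of p h NN] unfolding prime_ideal_def by blast
    have g: "f \<notin> p" "\<gamma> p = loc_class (- p) sN (A h, h)" using A[OF hv(2)] hp p unfolding good_def by auto
    have av: "\<alpha> v = sN (h ^ NN) (A h)" unfolding \<alpha>_def h_def ..
    have "sN v (A h) - sN h (\<alpha> v) = sN (h ^ Suc NN) (A h) - sN h (sN (h ^ NN) (A h))"
      unfolding av using hv(1) by simp
    also have "\<dots> = 0" by simp
    finally have "sN v (A h) - sN h (\<alpha> v) = 0" .
    then have "loc_rel (- p) sN (A h, h) (\<alpha> v, v)" unfolding loc_rel_def
      using prime_one[of p] p by (intro bexI[of _ 1]) auto
    then have "loc_class (- p) sN (A h, h) = loc_class (- p) sN (\<alpha> v, v)"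
      using hp p by (intro N.class_eq[OF mult_set_prime]) auto
    then show "f \<notin> p \<and> \<gamma> p = loc_class (- p) sN (\<alpha> v, v)" using g by simp
  qed
  have compat: "sN w (\<alpha> v) = sN v (\<alpha> w)" if "v \<in> V" "w \<in> V" for v w
  proof -
    define h where "h = \<rho> v"
    define k where "k = \<rho> w"
    have hv: "v = h ^ Suc NN" "h \<in> T1" using \<rho>[OF that(1)] unfolding h_def by auto
    have kw: "w = k ^ Suc NN" "k \<in> T1" using \<rho>[OF that(2)] unfolding k_def by auto
    have av: "\<alpha> v = sN (h ^ NN) (A h)" unfolding \<alpha>_def h_def ..
    have aw: "\<alpha> w = sN (k ^ NN) (A k)" unfolding \<alpha>_def k_def ..
    have "sN w (\<alpha> v) - sN v (\<alpha> w) = sN (k ^ Suc NN) (sN (h ^ NN) (A h)) - sN (h ^ Suc NN) (sN (k ^ NN) (A k))"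
      unfolding av aw using hv(1) kw(1) by simp
    also have "\<dots> = sN ((h * k) ^ NN) (sN k (A h) - sN h (A k))"
      by (simp add: N.scale_right_diff_distrib power_mult_distrib mult_ac)
    also have "\<dots> = 0" using nNN[OF hv(2) kw(2)] .
    finally show ?thesis by simp
  qed
  have Vcov: "\<exists>v\<in>V. v \<notin> p" if p: "prime_ideal p" "f \<notin> p" for p
  proof -
    obtain h where "h \<in> T1" "h \<notin> p" using cover2[OF T1(1) T1(3) p] by blast
    then show ?thesis unfolding V_def using prime_pow_notin[OF p(1)] by blast
  qed
  have "\<exists>T r e. finite T \<and> T \<subseteq> V \<and> f ^ e = (\<Sum>v\<in>T. r v * v)"
  proof (rule cover)
    fix p assume "prime_ideal p" "f \<notin> p" then show "\<exists>h\<in>V. h \<notin> p" by (rule Vcov)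
  qed
  then obtain T2 r2 e2 where T2: "finite T2" "T2 \<subseteq> V" "f ^ e2 = (\<Sum>v\<in>T2. r2 v * v)"
    by (elim exE conjE) (rule that; assumption)
  define a where "a = (\<Sum>w\<in>T2. sN (r2 w) (\<alpha> w))"
  define c where "c = loc_class (powers f) sN (a, f ^ e2)"
  have fe: "snd (a, f ^ e2) \<in> powers f" by simp
  have "c \<in> loc_carrier (powers f) sN" unfolding c_def using fe by (rule N.class_in_carrier)
  moreover have "\<gamma> = psi sN f c"
  proof
    fix p
    show "\<gamma> p = psi sN f c p"
    proof (cases "prime_ideal p \<and> f \<notin> p")
      case True
      then have p: "prime_ideal p" "f \<notin> p" by auto
      obtain v where v: "v \<in> T2" "v \<notin> p" using cover2[OF T2(1) T2(3) p] by blast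
      have vV: "v \<in> V" using v(1) T2(2) by blast
      have g: "\<gamma> p = loc_class (- p) sN (\<alpha> v, v)" using goodV[OF vV] p v(2) unfolding good_def by auto
      have "sN (f ^ e2) (\<alpha> v) - sN v a = (\<Sum>w\<in>T2. sN (r2 w) (sN w (\<alpha> v) - sN v (\<alpha> w)))"
        unfolding T2(3) a_def
        by (simp add: N.scale_sum_left N.scale_sum_right N.scale_right_diff_distrib sum_subtractf mult_ac)
      also have "\<dots> = 0" using compat vV T2(2) by (intro sum.neutral) auto
      finally have "loc_rel (- p) sN (\<alpha> v, v) (a, f ^ e2)" unfolding loc_rel_def
        using prime_one[of p] p by (intro bexI[of _ 1]) auto
      then have "loc_class (- p) sN (\<alpha> v, v) = loc_class (- p) sN (a, f ^ e2)"
        using v(2) prime_pow_notin[OF p] by (intro N.class_eq[OF mult_set_prime[OF p(1)]]) auto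
      then show ?thesis using g psi_class[OF N p fe] unfolding c_def by simp
    next
      case False
      then show ?thesis using \<gamma>0 unfolding psi_def by auto
    qed
  qed
  ultimately show ?thesis by blast
qed

theorem proposition3p20:
  fixes sM :: "'a::comm_ring_1 \<Rightarrow> 'm::ab_group_add \<Rightarrow> 'm"
    and sN :: "'a \<Rightarrow> 'n::ab_group_add \<Rightarrow> 'n"
    and f :: 'a
  assumes "module sM" and "module sN"
    and "faithful sM" and "primeful sM" and "Spec sM \<noteq> {}"
  shows "\<exists>\<phi>. bij_betw \<phi> (sections sM sN (Xr sM f)) (loc_carrier (powers f) sN) \<and>
     (\<forall>\<gamma>\<in>sections sM sN (Xr sM f). \<forall>\<delta>\<in>sections sM sN (Xr sM f).
        \<phi> (sect_add sM sN (Xr sM f) \<gamma> \<delta>) = loc_add (powers f) sN (\<phi> \<gamma>) (\<phi> \<delta>)) \<and>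
     (\<forall>r. \<forall>\<gamma>\<in>sections sM sN (Xr sM f).
        \<phi> (sect_scale sM sN (Xr sM f) r \<gamma>) = loc_scale (powers f) sN r (\<phi> \<gamma>))"
proof -
  note M = assms(1) and N = assms(2) and fa = assms(3) and pf = assms(4)
  define C where "C = loc_carrier (powers f) sN"
  define Sec where "Sec = sections sM sN (Xr sM f)"
  have inj: "inj_on (psi sN f) C" unfolding C_def by (rule psi_inj[OF N])
  have "psi sN f ` C = Sec"
  proof
    show "psi sN f ` C \<subseteq> Sec" unfolding C_def Sec_def using psi_in[OF M N fa pf] by blast
    show "Sec \<subseteq> psi sN f ` C" unfolding C_def Sec_def using psi_surj[OF M N fa pf] by blast
  qed
  then have bij: "bij_betw (psi sN f) C Sec" using inj unfolding bij_betw_def by blast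
  define \<phi> where "\<phi> = inv_into C (psi sN f)"
  have bijphi: "bij_betw \<phi> Sec C" unfolding \<phi>_def by (rule bij_betw_inv_into[OF bij])
  have bk: "\<phi> \<gamma> \<in> C" "psi sN f (\<phi> \<gamma>) = \<gamma>" if "\<gamma> \<in> Sec" for \<gamma>
    using that \<open>psi sN f ` C = Sec\<close> unfolding \<phi>_def by (auto intro: inv_into_into f_inv_into_f)
  have fwd: "\<phi> (psi sN f c) = c" if "c \<in> C" for c
    unfolding \<phi>_def using inv_into_f_f[OF inj that] .
  have add: "\<phi> (sect_add sM sN (Xr sM f) \<gamma> \<delta>) = loc_add (powers f) sN (\<phi> \<gamma>) (\<phi> \<delta>)"
    if "\<gamma> \<in> Sec" "\<delta> \<in> Sec" for \<gamma> \<delta>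
  proof -
    have c: "\<phi> \<gamma> \<in> loc_carrier (powers f) sN" and d: "\<phi> \<delta> \<in> loc_carrier (powers f) sN"
      using bk(1)[OF that(1)] bk(1)[OF that(2)] unfolding C_def by auto
    have "sect_add sM sN (Xr sM f) \<gamma> \<delta> = sect_add sM sN (Xr sM f) (psi sN f (\<phi> \<gamma>)) (psi sN f (\<phi> \<delta>))"
      using bk(2)[OF that(1)] bk(2)[OF that(2)] by simp
    also have "\<dots> = psi sN f (loc_add (powers f) sN (\<phi> \<gamma>) (\<phi> \<delta>))"
      using psi_add(2)[OF M N fa pf c d] by simp
    finally show ?thesis using fwd psi_add(1)[OF M N fa pf c d] unfolding C_def by simp
  qed
  have sc: "\<phi> (sect_scale sM sN (Xr sM f) r \<gamma>) = loc_scale (powers f) sN r (\<phi> \<gamma>)"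
    if "\<gamma> \<in> Sec" for \<gamma> r
  proof -
    have c: "\<phi> \<gamma> \<in> loc_carrier (powers f) sN"
      using bk(1)[OF that(1)] unfolding C_def by auto
    have "sect_scale sM sN (Xr sM f) r \<gamma> = sect_scale sM sN (Xr sM f) r (psi sN f (\<phi> \<gamma>))"
      using bk(2)[OF that(1)] by simp
    also have "\<dots> = psi sN f (loc_scale (powers f) sN r (\<phi> \<gamma>))"
      using psi_scale(2)[OF M N fa pf c] by simp
    finally show ?thesis using fwd psi_scale(1)[OF M N fa pf c] unfolding C_def by simp
  qed
  show ?thesis
    using bijphi add sc unfolding C_def Sec_def by blast
qed

end
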